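(* Let $\boldsymbol{\rho}=(\rho_{ij})_{i,j\in[d]}$ be a $d\times d$ correlation matrix, $d\ge 2$. Define a relation on $[d]$ by $$i \sim j \iff \max_{l\in[d],\, l\neq i,j} |\rho_{il}-\rho_{jl}| = 0 .$$ Then $\sim$ is an equivalence relation, and the partition $G^{\star}$ of $[d]$ into its equivalence classes is the unique coarsest partition $G$ of $[d]$ for which there exist a membership matrix $\mathbf{Z}$ associated with $G$, a $K\times K$ matrix $\boldsymbol{\Pi}$ ($K$ = number of blocks of $G$) and a $d\times d$ diagonal matrix $\boldsymbol{\Gamma}$ with $$\boldsymbol{\rho}=\mathbf{Z}\boldsymbol{\Pi}\mathbf{Z}^{\top}+\boldsymbol{\Gamma}.$$ That is, $G^{\star}$ itself admits such a decomposition, and every partition $G$ admitting such a decomposition is a refinement of $G^{\star}$.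
   Context: $[d]=\{1,\dots,d\}$. For a partition $G=\{G_1,\dots,G_K\}$ of $[d]$ with membership map $z:[d]\to[K]$ ($z(i)=k$ iff $i\in G_k$), the associated membership matrix is the $d\times K$ matrix $\mathbf{Z}=(\mathbf{1}_{\{z(i)=k\}})_{(i,k)\in[d]\times[K]}$. A partition $G$ is finer than (a refinement of) $G'$ if every block of $G$ is contained in a block of $G'$; "coarsest" refers to this partial order. *)

theory Defs
  imports Complex_Main "HOL-Library.Disjoint_Sets"
begin

text \<open>Matrices are real-valued functions on index pairs; [d] = {1..d}.\<close>

definition correlation_matrix :: "nat \<Rightarrow> (nat \<Rightarrow> nat \<Rightarrow> real) \<Rightarrow> bool" where
  "correlation_matrix d \<rho> \<longleftrightarrow>
     (\<forall>i\<in>{1..d}. \<rho> i i = 1) \<and>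
     (\<forall>i\<in>{1..d}. \<forall>j\<in>{1..d}. \<rho> i j = \<rho> j i) \<and>
     (\<forall>x :: nat \<Rightarrow> real. (\<Sum>i=1..d. \<Sum>j=1..d. x i * \<rho> i j * x j) \<ge> 0)"

definition max_diff :: "nat \<Rightarrow> (nat \<Rightarrow> nat \<Rightarrow> real) \<Rightarrow> nat \<Rightarrow> nat \<Rightarrow> real" where
  "max_diff d \<rho> i j =
     (let S = {1..d} - {i, j} in
      if S = {} then 0 else Max ((\<lambda>l. \<bar>\<rho> i l - \<rho> j l\<bar>) ` S))"

definition corr_rel :: "nat \<Rightarrow> (nat \<Rightarrow> nat \<Rightarrow> real) \<Rightarrow> (nat \<times> nat) set" where
  "corr_rel d \<rho> = {(i, j). i \<in> {1..d} \<and> j \<in> {1..d} \<and> max_diff d \<rho> i j = 0}"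

definition membership_map :: "nat \<Rightarrow> nat set set \<Rightarrow> nat \<Rightarrow> (nat \<Rightarrow> nat) \<Rightarrow> bool" where
  "membership_map d G K z \<longleftrightarrow>
     K = card G \<and>
     (\<exists>Gs. bij_betw Gs {1..K} G \<and>
        (\<forall>i\<in>{1..d}. \<forall>k\<in>{1..K}. z i = k \<longleftrightarrow> i \<in> Gs k))"

definition membership_matrix :: "(nat \<Rightarrow> nat) \<Rightarrow> nat \<Rightarrow> nat \<Rightarrow> real" where
  "membership_matrix z i k = (if z i = k then 1 else 0)"

definition admits_decomp :: "nat \<Rightarrow> (nat \<Rightarrow> nat \<Rightarrow> real) \<Rightarrow> nat set set \<Rightarrow> bool" where
  "admits_decomp d \<rho> G \<longleftrightarrow>
     (\<exists>z Pm Gm. membership_map d G (card G) z \<and>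
        (\<forall>i\<in>{1..d}. \<forall>j\<in>{1..d}. i \<noteq> j \<longrightarrow> Gm i j = 0) \<and>
        (\<forall>i\<in>{1..d}. \<forall>j\<in>{1..d}.
           \<rho> i j = (\<Sum>k=1..card G. \<Sum>l=1..card G.
                       membership_matrix z i k * Pm k l * membership_matrix z j l) + Gm i j))"

definition finer :: "'a set set \<Rightarrow> 'a set set \<Rightarrow> bool" where
  "finer G G' \<longleftrightarrow> (\<forall>B\<in>G. \<exists>B'\<in>G'. B \<subseteq> B')"

end

theory Submission
  imports Defs
begin

lemma max_diff_zero:
  "max_diff d \<rho> i j = 0 \<longleftrightarrow> (\<forall>l\<in>{1..d}. l \<noteq> i \<longrightarrow> l \<noteq> j \<longrightarrow> \<rho> i l = \<rho> j l)"
proof -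
  let ?S = "{1..d} - {i, j}"
  let ?f = "\<lambda>l. \<bar>\<rho> i l - \<rho> j l\<bar>"
  have eqv: "(\<forall>l\<in>?S. ?f l = 0) \<longleftrightarrow> (\<forall>l\<in>{1..d}. l \<noteq> i \<longrightarrow> l \<noteq> j \<longrightarrow> \<rho> i l = \<rho> j l)"
    by auto
  show ?thesis
  proof (cases "?S = {}")
    case True
    have md: "max_diff d \<rho> i j = 0" using True unfolding max_diff_def Let_def by simp
    show ?thesis using md eqv True by blast
  next
    case False
    have md: "max_diff d \<rho> i j = Max (?f ` ?S)" using False unfolding max_diff_def Let_def by simp
    have fin: "finite (?f ` ?S)" by simp
    have "Max (?f ` ?S) = 0 \<longleftrightarrow> (\<forall>l\<in>?S. ?f l = 0)"
    proof
      assume M: "Max (?f ` ?S) = 0"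
      show "\<forall>l\<in>?S. ?f l = 0"
      proof
        fix l assume l: "l \<in> ?S"
        have "?f l \<in> ?f ` ?S" using l by (rule imageI)
        then have "?f l \<le> Max (?f ` ?S)" by (rule Max_ge[OF fin])
        then show "?f l = 0" using M by simp
      qed
    next
      assume A: "\<forall>l\<in>?S. ?f l = 0"
      have "?f ` ?S = (\<lambda>l. 0) ` ?S" using A by (intro image_cong) simp_all
      also have "\<dots> = {0}" using False by (simp only: image_constant_conv if_False)
      finally show "Max (?f ` ?S) = 0" by simp
    qed
    then show ?thesis using md eqv by simp
  qed
qed

lemma corr_rel_iff:
  "(i, j) \<in> corr_rel d \<rho> \<longleftrightarrow> i \<in> {1..d} \<and> j \<in> {1..d} \<and>
     (\<forall>l\<in>{1..d}. l \<noteq> i \<longrightarrow> l \<noteq> j \<longrightarrow> \<rho> i l = \<rho> j l)"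
  unfolding corr_rel_def using max_diff_zero by auto

theorem theorem1:
  fixes d :: nat and \<rho> :: "nat \<Rightarrow> nat \<Rightarrow> real"
  assumes "d \<ge> 2" and "correlation_matrix d \<rho>"
  shows "equiv {1..d} (corr_rel d \<rho>)
     \<and> partition_on {1..d} ({1..d} // corr_rel d \<rho>)
     \<and> admits_decomp d \<rho> ({1..d} // corr_rel d \<rho>)
     \<and> (\<forall>G. partition_on {1..d} G \<and> admits_decomp d \<rho> G
            \<longrightarrow> finer G ({1..d} // corr_rel d \<rho>))"
proof -
  let ?R = "corr_rel d \<rho>"
  let ?Q = "{1..d} // ?R"
  have sym: "\<And>i j. i \<in> {1..d} \<Longrightarrow> j \<in> {1..d} \<Longrightarrow> \<rho> i j = \<rho> j i"
    using assms(2) by (auto simp: correlation_matrix_def)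
  have L1: "\<And>i i' l. (i, i') \<in> ?R \<Longrightarrow> l \<in> {1..d} \<Longrightarrow> l \<noteq> i \<Longrightarrow> l \<noteq> i' \<Longrightarrow> \<rho> i l = \<rho> i' l"
    by (auto simp: corr_rel_iff)
  have eq: "equiv {1..d} ?R"
  proof (rule equivI)
    show "?R \<subseteq> {1..d} \<times> {1..d}" by (auto simp: corr_rel_def)
    show "refl_on {1..d} ?R" by (auto simp: refl_on_def corr_rel_iff)
    show "sym ?R" by (auto simp: sym_def corr_rel_iff)
    show "trans ?R"
    proof (rule transI)
      fix i j k assume ij: "(i, j) \<in> ?R" and jk: "(j, k) \<in> ?R"
      have dom: "i \<in> {1..d}" "j \<in> {1..d}" "k \<in> {1..d}" using ij jk by (auto simp: corr_rel_iff)
      show "(i, k) \<in> ?R"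
        unfolding corr_rel_iff
      proof (intro conjI ballI impI)
        fix l assume l: "l \<in> {1..d}" "l \<noteq> i" "l \<noteq> k"
        show "\<rho> i l = \<rho> k l"
        proof (cases "l = j")
          case False
          then show ?thesis using L1[OF ij l(1)] L1[OF jk l(1)] l by (cases "i = j"; cases "j = k") auto
        next
          case True
          show ?thesis
          proof (cases "i = k")
            case True then show ?thesis by simp
          next
            case False
            have a: "\<rho> i k = \<rho> j k" using L1[OF ij dom(3)] l True False by auto
            have b: "\<rho> j i = \<rho> k i" using L1[OF jk dom(1)] l True False by auto
            have "\<rho> i j = \<rho> j i" "\<rho> j k = \<rho> k j" "\<rho> i k = \<rho> k i" using sym dom by auto
            then show ?thesis using a b \<open>l = j\<close> by simp
          qed
        qed
      qed (use dom in auto)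
    qed
  qed
  have part: "partition_on {1..d} ?Q" by (rule partition_on_quotient[OF eq])
  have finQ: "finite ?Q" by (rule finite_quotient[OF _ equiv_type[OF eq]]) simp
  obtain Gs where Gs: "bij_betw Gs {1..card ?Q} ?Q" using ex_bij_betw_nat_finite_1[OF finQ] by blast
  define z where "z i = inv_into {1..card ?Q} Gs (?R `` {i})" for i
  have clsQ: "\<And>i. i \<in> {1..d} \<Longrightarrow> ?R `` {i} \<in> ?Q" by (simp add: quotientI)
  have zin: "\<And>i. i \<in> {1..d} \<Longrightarrow> z i \<in> {1..card ?Q} \<and> Gs (z i) = ?R `` {i}"
  proof -
    fix i assume i: "i \<in> {1..d}"
    have m: "?R `` {i} \<in> Gs ` {1..card ?Q}" using Gs clsQ[OF i] by (simp add: bij_betw_def)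
    show "z i \<in> {1..card ?Q} \<and> Gs (z i) = ?R `` {i}"
      unfolding z_def using inv_into_into[OF m] f_inv_into_f[OF m] by blast
  qed
  have memb: "\<And>i k. i \<in> {1..d} \<Longrightarrow> k \<in> {1..card ?Q} \<Longrightarrow> z i = k \<longleftrightarrow> i \<in> Gs k"
  proof -
    fix i k assume i: "i \<in> {1..d}" and k: "k \<in> {1..card ?Q}"
    have iin: "i \<in> ?R `` {i}" by (rule equiv_class_self[OF eq i])
    have GkQ: "Gs k \<in> ?Q" using Gs k by (auto simp: bij_betw_def)
    show "z i = k \<longleftrightarrow> i \<in> Gs k"
    proof
      assume "z i = k" then show "i \<in> Gs k" using zin[OF i] iin by simp
    next
      assume "i \<in> Gs k"
      then have "Gs k = ?R `` {i}" using quotient_disj[OF eq GkQ clsQ[OF i]] iin by auto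
      then have "Gs k = Gs (z i)" using zin[OF i] by simp
      then have "k = z i" by (rule inj_onD[OF bij_betw_imp_inj_on[OF Gs] _ k conjunct1[OF zin[OF i]]])
      then show "z i = k" by simp
    qed
  qed
  have zeq: "\<And>i j. i \<in> {1..d} \<Longrightarrow> j \<in> {1..d} \<Longrightarrow> z i = z j \<Longrightarrow> (i, j) \<in> ?R"
  proof -
    fix i j assume h: "i \<in> {1..d}" "j \<in> {1..d}" "z i = z j"
    have "?R `` {i} = ?R `` {j}" using zin[OF h(1)] zin[OF h(2)] h(3) by simp
    then show "(i, j) \<in> ?R" using equiv_class_eq_iff[OF eq] h by blast
  qed
  have key: "\<And>i j i' j'. (i, i') \<in> ?R \<Longrightarrow> (j, j') \<in> ?R \<Longrightarrow> i \<noteq> j \<Longrightarrow> i' \<noteq> j' \<Longrightarrow> \<rho> i j = \<rho> i' j'"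
  proof -
    fix i j i' j' assume ii: "(i, i') \<in> ?R" and jj: "(j, j') \<in> ?R" and ne: "i \<noteq> j" "i' \<noteq> j'"
    have dom: "i \<in> {1..d}" "j \<in> {1..d}" "i' \<in> {1..d}" "j' \<in> {1..d}" using ii jj by (auto simp: corr_rel_iff)
    show "\<rho> i j = \<rho> i' j'"
    proof (cases "j = i'")
      case False
      have 1: "\<rho> i j = \<rho> i' j" using L1[OF ii dom(2)] ne False by (cases "i = i'") auto
      have 2: "\<rho> j i' = \<rho> j' i'" using L1[OF jj dom(3)] ne False by (cases "j = j'") auto
      have 3: "\<rho> i' j = \<rho> j i'" by (rule sym[OF dom(3) dom(2)])
      have 4: "\<rho> j' i' = \<rho> i' j'" by (rule sym[OF dom(4) dom(3)])
      show ?thesis using 1 2 3 4 by simp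
    next
      case True
      have ij: "(i, j) \<in> ?R" using ii True by simp
      show ?thesis
      proof (cases "j' = i")
        case True then show ?thesis using \<open>j = i'\<close> sym[OF dom(1) dom(2)] by simp
      next
        case False
        have a: "\<rho> i j' = \<rho> j j'" using L1[OF ij dom(4)] False ne True by auto
        have b: "\<rho> j i = \<rho> j' i" using L1[OF jj dom(1)] False ne by auto
        have c: "\<rho> i j = \<rho> j i" by (rule sym[OF dom(1) dom(2)])
        have e: "\<rho> j' i = \<rho> i j'" by (rule sym[OF dom(4) dom(1)])
        show ?thesis using a b c e \<open>j = i'\<close> by simp
      qed
    qed
  qed
  have decomp: "admits_decomp d \<rho> ?Q"
  proof -
    define P where "P k l = (if \<exists>i j. i \<in> {1..d} \<and> j \<in> {1..d} \<and> i \<noteq> j \<and> z i = k \<and> z j = l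
        then \<rho> (fst (SOME p. fst p \<in> {1..d} \<and> snd p \<in> {1..d} \<and> fst p \<noteq> snd p \<and> z (fst p) = k \<and> z (snd p) = l))
               (snd (SOME p. fst p \<in> {1..d} \<and> snd p \<in> {1..d} \<and> fst p \<noteq> snd p \<and> z (fst p) = k \<and> z (snd p) = l))
        else 0)" for k l
    define Gm where "Gm i j = (if i = j then \<rho> i i - P (z i) (z i) else 0)" for i j
    have Pval: "\<And>i j. i \<in> {1..d} \<Longrightarrow> j \<in> {1..d} \<Longrightarrow> i \<noteq> j \<Longrightarrow> P (z i) (z j) = \<rho> i j"
    proof -
      fix i j assume h: "i \<in> {1..d}" "j \<in> {1..d}" "i \<noteq> j"
      let ?p = "SOME p. fst p \<in> {1..d} \<and> snd p \<in> {1..d} \<and> fst p \<noteq> snd p \<and> z (fst p) = z i \<and> z (snd p) = z j"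
      define Qp where "Qp p = (fst p \<in> {1..d} \<and> snd p \<in> {1..d} \<and> fst p \<noteq> snd p \<and> z (fst p) = z i \<and> z (snd p) = z j)" for p :: "nat \<times> nat"
      have ex: "\<exists>p. Qp p" unfolding Qp_def using h by (intro exI[of _ "(i, j)"]) simp
      have Qs: "Qp (SOME p. Qp p)" using ex by (rule someI_ex)
      define a where "a = fst (SOME p. Qp p)"
      define b where "b = snd (SOME p. Qp p)"
      have ab: "a \<in> {1..d}" "b \<in> {1..d}" "a \<noteq> b" "z a = z i" "z b = z j"
        using Qs unfolding Qp_def a_def b_def by auto
      have r1: "(a, i) \<in> ?R" using zeq ab h by blast
      have r2: "(b, j) \<in> ?R" using zeq ab h by blast
      have "\<rho> a b = \<rho> i j" using key[OF r1 r2 ab(3) h(3)] .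
      then have "\<rho> (fst (SOME p. Qp p)) (snd (SOME p. Qp p)) = \<rho> i j" unfolding a_def b_def .
      then have "\<rho> (fst ?p) (snd ?p) = \<rho> i j" unfolding Qp_def .
      then show "P (z i) (z j) = \<rho> i j" unfolding P_def using h by auto
    qed
    have sumeq: "\<And>i j. i \<in> {1..d} \<Longrightarrow> j \<in> {1..d} \<Longrightarrow>
       (\<Sum>k=1..card ?Q. \<Sum>l=1..card ?Q. membership_matrix z i k * P k l * membership_matrix z j l) = P (z i) (z j)"
    proof -
      fix i j assume h: "i \<in> {1..d}" "j \<in> {1..d}"
      have "(\<Sum>k=1..card ?Q. \<Sum>l=1..card ?Q. membership_matrix z i k * P k l * membership_matrix z j l)
          = (\<Sum>k=1..card ?Q. if k = z i then P k (z j) else 0)"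
        using zin[OF h(2)]
        by (intro sum.cong refl) (simp add: membership_matrix_def if_distrib cong: if_cong)
      also have "\<dots> = P (z i) (z j)" using zin[OF h(1)] by simp
      finally show "(\<Sum>k=1..card ?Q. \<Sum>l=1..card ?Q. membership_matrix z i k * P k l * membership_matrix z j l) = P (z i) (z j)" .
    qed
    show ?thesis unfolding admits_decomp_def
    proof (intro exI conjI ballI impI)
      show "membership_map d ?Q (card ?Q) z" unfolding membership_map_def using Gs memb by blast
      show "\<And>i j. i \<in> {1..d} \<Longrightarrow> j \<in> {1..d} \<Longrightarrow> i \<noteq> j \<Longrightarrow> Gm i j = 0" by (simp add: Gm_def)
      fix i j assume h: "i \<in> {1..d}" "j \<in> {1..d}"
      show "\<rho> i j = (\<Sum>k=1..card ?Q. \<Sum>l=1..card ?Q. membership_matrix z i k * P k l * membership_matrix z j l) + Gm i j"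
        using sumeq[OF h] Pval[OF h] by (cases "i = j") (auto simp: Gm_def)
    qed
  qed
  have fin: "\<forall>G. partition_on {1..d} G \<and> admits_decomp d \<rho> G \<longrightarrow> finer G ?Q"
  proof (intro allI impI)
    fix G assume hG: "partition_on {1..d} G \<and> admits_decomp d \<rho> G"
    then obtain z' Pm Gm where mm: "membership_map d G (card G) z'"
      and gd: "\<forall>i\<in>{1..d}. \<forall>j\<in>{1..d}. i \<noteq> j \<longrightarrow> Gm i j = 0"
      and dec: "\<forall>i\<in>{1..d}. \<forall>j\<in>{1..d}. \<rho> i j = (\<Sum>k=1..card G. \<Sum>l=1..card G.
                       membership_matrix z' i k * Pm k l * membership_matrix z' j l) + Gm i j"
      unfolding admits_decomp_def by blast
    obtain Hs where Hs: "bij_betw Hs {1..card G} G" and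
      hz: "\<forall>i\<in>{1..d}. \<forall>k\<in>{1..card G}. z' i = k \<longleftrightarrow> i \<in> Hs k"
      using mm unfolding membership_map_def by blast
    have pG: "\<Union>G = {1..d}" "{} \<notin> G" using hG by (auto simp: partition_on_def)
    have sumeq: "\<And>i j. i \<in> {1..d} \<Longrightarrow> j \<in> {1..d} \<Longrightarrow> z' i \<in> {1..card G} \<Longrightarrow> z' j \<in> {1..card G} \<Longrightarrow>
       (\<Sum>k=1..card G. \<Sum>l=1..card G. membership_matrix z' i k * Pm k l * membership_matrix z' j l) = Pm (z' i) (z' j)"
    proof -
      fix i j assume h: "i \<in> {1..d}" "j \<in> {1..d}" "z' i \<in> {1..card G}" "z' j \<in> {1..card G}"
      have "(\<Sum>k=1..card G. \<Sum>l=1..card G. membership_matrix z' i k * Pm k l * membership_matrix z' j l)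
          = (\<Sum>k=1..card G. if k = z' i then Pm k (z' j) else 0)"
        using h(4)
        by (intro sum.cong refl) (simp add: membership_matrix_def if_distrib cong: if_cong)
      also have "\<dots> = Pm (z' i) (z' j)" using h(3) by simp
      finally show "(\<Sum>k=1..card G. \<Sum>l=1..card G. membership_matrix z' i k * Pm k l * membership_matrix z' j l) = Pm (z' i) (z' j)" .
    qed
    have zr: "\<And>i. i \<in> {1..d} \<Longrightarrow> z' i \<in> {1..card G}"
    proof -
      fix i assume i: "i \<in> {1..d}"
      then obtain B where "B \<in> G" "i \<in> B" using pG by blast
      then have "B \<in> Hs ` {1..card G}" using Hs by (simp add: bij_betw_def)
      then obtain k where "k \<in> {1..card G}" "Hs k = B" by (metis imageE)
      then show "z' i \<in> {1..card G}" using hz i \<open>i \<in> B\<close> by metis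
    qed
    have rhoP: "\<And>i j. i \<in> {1..d} \<Longrightarrow> j \<in> {1..d} \<Longrightarrow> i \<noteq> j \<Longrightarrow> \<rho> i j = Pm (z' i) (z' j)"
      using dec gd sumeq zr by simp
    show "finer G ?Q" unfolding finer_def
    proof
      fix B assume B: "B \<in> G"
      then obtain i where i: "i \<in> B" using pG by (metis ex_in_conv)
      have Bsub: "B \<subseteq> {1..d}" using B pG by blast
      have "B \<in> Hs ` {1..card G}" using Hs B by (simp add: bij_betw_def)
      then obtain k where k: "k \<in> {1..card G}" "Hs k = B" by (metis imageE)
      have zB: "\<And>j. j \<in> B \<Longrightarrow> z' j = k" using hz k Bsub by blast
      have "B \<subseteq> ?R `` {i}"
      proof
        fix j assume j: "j \<in> B"
        have "(i, j) \<in> ?R" unfolding corr_rel_iff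
        proof (intro conjI ballI impI)
          fix l assume l: "l \<in> {1..d}" "l \<noteq> i" "l \<noteq> j"
          have ij: "i \<in> {1..d}" "j \<in> {1..d}" using i j Bsub by auto
          show "\<rho> i l = \<rho> j l" using rhoP[OF ij(1) l(1)] rhoP[OF ij(2) l(1)] l zB[OF i] zB[OF j] by simp
        qed (use i j Bsub in auto)
        then show "j \<in> ?R `` {i}" by simp
      qed
      then show "\<exists>B'\<in>?Q. B \<subseteq> B'" using clsQ i Bsub by blast
    qed
  qed
  show ?thesis using eq part decomp fin by blast
qed

end
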